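(* Let $n\ge 1$ be an integer. (1) If $n$ is odd, let $m=3(n+1)$ and $S=\{1,\dots,\frac{n+1}{2}\}\cup\{\frac{3(n+1)}{2}+1,\dots,2n+1\}$. (2) If $n$ is even, let $m=3n+2$ and $S=\{1,\dots,\frac{n}{2}\}\cup\{\frac{3n+2}{2}+1,\dots,2n+1\}$. In either case let $D_n$ be the mixed graph on vertex set $\mathbb{Z}_m$ whose arcs are $(i,i+s)$ for all $i\in\mathbb{Z}_m$, $s\in S$, and whose edges are $\{i,i+m/2\}$ for all $i\in\mathbb{Z}_m$ (edges joining antipodal vertices). Then $D_n$ is $n$-arc-regular (every vertex is the tail of exactly $n$ arcs and the head of exactly $n$ arcs), $1$-edge-regular, and has girth $4$.
   Context: A mixed graph is a finite simple graph that may contain both edges and arcs. Walks traverse edges in either direction and arcs only in their direction; a cycle is a closed walk with no repeated vertices (other than start = end) and no repeated edge or arc; the girth is the length of a shortest cycle. *)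

theory Defs
  imports Main "HOL-Library.Extended_Nat"
begin

datatype 'a link = Arc 'a 'a | Edge "'a set"

definition link_step :: "('a \<times> 'a) set \<Rightarrow> 'a set set \<Rightarrow> 'a \<Rightarrow> 'a link \<Rightarrow> 'a \<Rightarrow> bool" where
  "link_step A E x l y \<longleftrightarrow>
     (l = Arc x y \<and> (x, y) \<in> A) \<or> (l = Edge {x, y} \<and> {x, y} \<in> E)"

definition mixed_walk :: "'a set \<Rightarrow> ('a \<times> 'a) set \<Rightarrow> 'a set set \<Rightarrow> 'a list \<Rightarrow> 'a link list \<Rightarrow> bool" where
  "mixed_walk V A E vs ls \<longleftrightarrow>
     length vs = Suc (length ls) \<and> set vs \<subseteq> V \<and>
     (\<forall>i < length ls. link_step A E (vs ! i) (ls ! i) (vs ! Suc i))"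

definition mixed_cycle :: "'a set \<Rightarrow> ('a \<times> 'a) set \<Rightarrow> 'a set set \<Rightarrow> 'a list \<Rightarrow> 'a link list \<Rightarrow> bool" where
  "mixed_cycle V A E vs ls \<longleftrightarrow>
     mixed_walk V A E vs ls \<and> ls \<noteq> [] \<and> hd vs = last vs \<and>
     distinct (tl vs) \<and> distinct ls"

text \<open>Girth: length of a shortest cycle (infinity if there is no cycle).\<close>
definition mixed_girth :: "'a set \<Rightarrow> ('a \<times> 'a) set \<Rightarrow> 'a set set \<Rightarrow> enat" where
  "mixed_girth V A E = (INF p \<in> {(vs, ls). mixed_cycle V A E vs ls}. enat (length (snd p)))"

definition arc_regular :: "'a set \<Rightarrow> ('a \<times> 'a) set \<Rightarrow> nat \<Rightarrow> bool" where
  "arc_regular V A z \<longleftrightarrow>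
     (\<forall>v \<in> V. card {w. (v, w) \<in> A} = z \<and> card {u. (u, v) \<in> A} = z)"

definition edge_regular :: "'a set \<Rightarrow> 'a set set \<Rightarrow> nat \<Rightarrow> bool" where
  "edge_regular V E r \<longleftrightarrow> (\<forall>v \<in> V. card {w. {v, w} \<in> E} = r)"

text \<open>The graph D_n on Z_m, with Z_m represented by {0..<m} and arithmetic mod m.\<close>
definition D_m :: "nat \<Rightarrow> nat" where
  "D_m n = (if odd n then 3 * (n + 1) else 3 * n + 2)"

definition D_S :: "nat \<Rightarrow> nat set" where
  "D_S n = (if odd n
     then {1 .. (n + 1) div 2} \<union> {3 * (n + 1) div 2 + 1 .. 2 * n + 1}
     else {1 .. n div 2} \<union> {(3 * n + 2) div 2 + 1 .. 2 * n + 1})"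

definition D_V :: "nat \<Rightarrow> nat set" where
  "D_V n = {0 ..< D_m n}"

definition D_A :: "nat \<Rightarrow> (nat \<times> nat) set" where
  "D_A n = {(i, (i + s) mod D_m n) | i s. i < D_m n \<and> s \<in> D_S n}"

definition D_E :: "nat \<Rightarrow> nat set set" where
  "D_E n = {{i, (i + D_m n div 2) mod D_m n} | i. i < D_m n}"

end

theory Submission
  imports Defs
begin

lemma modlt: "(x::nat) < 2*m \<Longrightarrow> x mod m = (if x < m then x else x - m)"
  by (simp add: mod_if le_mod_geq)

lemma step:
  fixes m h :: nat
  assumes "link_step A E x l y"
    and A: "A = {(i, (i + s) mod m) | i s. i < m \<and> s \<in> S}"
    and E: "E = {{i, (i + h) mod m} | i. i < m}"
    and m: "m = 2*h" and h: "0 < h"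
  shows "x < m \<and> y < m \<and> ((\<exists>s\<in>S. y = (x+s) mod m \<and> l = Arc x y) \<or> (y = (x+h) mod m \<and> l = Edge {x,y}))"
proof -
  have mp: "0 < m" using m h by simp
  from assms(1) consider "l = Arc x y" "(x,y) \<in> A" | "l = Edge {x,y}" "{x,y} \<in> E"
    unfolding link_step_def by blast
  then show ?thesis
  proof cases
    case 1
    then show ?thesis using A mp by auto
  next
    case 2
    then obtain i where i: "i < m" "{x,y} = {i, (i+h) mod m}" using E by auto
    have bk: "((i+h) mod m + h) mod m = i"
    proof -
      have "((i+h) mod m + h) mod m = (i + h + h) mod m" by (simp add: mod_add_left_eq)
      moreover have "i + h + h = i + m" using m by simp
      ultimately show ?thesis using i by simp
    qed
    from i(2) have "(x = i \<and> y = (i+h) mod m) \<or> (x = (i+h) mod m \<and> y = i)"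
      by (auto simp: doubleton_eq_iff)
    then show ?thesis using 2 i mp bk by auto
  qed
qed

lemma twoh: "x < m \<Longrightarrow> m = 2*h \<Longrightarrow> (((x::nat)+h) mod m + h) mod m = x"
proof -
  assume a: "x < m" "m = 2*h"
  have "((x+h) mod m + h) mod m = (x + h + h) mod m" by (simp add: mod_add_left_eq)
  moreover have "x + h + h = x + m" using a by simp
  ultimately show ?thesis using a by simp
qed


lemma step2:
  fixes m h :: nat
  assumes "link_step A E x l y"
    and A: "A = {(i, (i + s) mod m) | i s. i < m \<and> s \<in> S}"
    and E: "E = {{i, (i + h) mod m} | i. i < m}"
    and m: "m = 2*h" and h: "0 < h"
  shows "x < m \<and> y < m \<and> (\<exists>d. y = (x+d) mod m \<and> (d \<in> S \<or> (d = h \<and> l = Edge {x,y})))"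
  using step[OF assms] by blast

lemma closing: "(x::nat) < m \<Longrightarrow> (x + D) mod m = x \<Longrightarrow> \<exists>q. D = q*m"
proof -
  assume a: "x < m" "(x + D) mod m = x"
  have "(x + D) div m * m + (x + D) mod m = x + D" by (rule div_mult_mod_eq)
  then have "D = (x + D) div m * m" using a by simp
  then show ?thesis by blast
qed

lemma short_free:
  fixes m h :: nat
  assumes cyc: "mixed_cycle V A E vs ls"
    and A: "A = {(i, (i + s) mod m) | i s. i < m \<and> s \<in> S}"
    and E: "E = {{i, (i + h) mod m} | i. i < m}"
    and m: "m = 2*h" and h: "0 < h"
    and S1: "\<forall>s\<in>S. 0 < s \<and> s < m \<and> s \<noteq> h"
    and S2: "\<forall>s\<in>S. \<forall>t\<in>S. s + t \<noteq> m \<and> s + t \<noteq> h \<and> s + t \<noteq> 3*h"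
    and S3: "\<forall>s\<in>S. \<forall>t\<in>S. \<forall>u\<in>S. s + t + u \<noteq> m \<and> s + t + u \<noteq> 2*m"
  shows "4 \<le> length ls"
proof (rule ccontr)
  assume "\<not> 4 \<le> length ls"
  moreover have "ls \<noteq> []" using cyc unfolding mixed_cycle_def by blast
  moreover have "length ls \<noteq> 0" using \<open>ls \<noteq> []\<close> by simp
  ultimately have L: "length ls = 1 \<or> length ls = 2 \<or> length ls = 3"
    by linarith
  have walk: "length vs = Suc (length ls)"
    "\<And>i. i < length ls \<Longrightarrow> link_step A E (vs ! i) (ls ! i) (vs ! Suc i)"
    using cyc unfolding mixed_cycle_def mixed_walk_def by auto
  have hl: "hd vs = last vs" and dt: "distinct (tl vs)" and dl: "distinct ls"
    using cyc unfolding mixed_cycle_def by auto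
  note st = step2[OF _ A E m h]
  have dpos: "\<And>d. d \<in> S \<or> d = h \<Longrightarrow> 0 < d \<and> d < m"
  proof -
    fix d assume "d \<in> S \<or> d = h"
    then show "0 < d \<and> d < m"
    proof
      assume "d \<in> S" then show ?thesis using S1 by blast
    next
      assume "d = h" then show ?thesis using h m by simp
    qed
  qed
  from L show False
  proof (elim disjE)
    assume l1: "length ls = 1"
    then obtain a b where vs: "vs = [a,b]" using walk(1)
      by (auto simp: length_Suc_conv)
    have "link_step A E a (ls!0) b" using walk(2)[of 0] l1 vs by simp
    from st[OF this] obtain d where d: "a < m" "b = (a+d) mod m" "d \<in> S \<or> d = h" by blast
    have "a = b" using hl vs by simp
    then have "(a + d) mod m = a" using d(2) by simp
    then have "\<exists>q. d = q*m" by (rule closing[OF d(1)])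
    then obtain q where "d = q*m" by blast
    moreover have "0 < d" "d < m" using dpos[OF d(3)] by auto
    ultimately show False by (cases q) auto
  next
    assume l2: "length ls = 2"
    then obtain a b c where vs: "vs = [a,b,c]" using walk(1)
      by (auto simp: length_Suc_conv numeral_eq_Suc)
    have s1: "link_step A E a (ls!0) b" using walk(2)[of 0] l2 vs by simp
    have s2: "link_step A E b (ls!1) c" using walk(2)[of 1] l2 vs by simp
    from st[OF s1] obtain d1 where d1: "a < m" "b = (a+d1) mod m" "d1 \<in> S \<or> (d1 = h \<and> ls!0 = Edge {a,b})" by blast
    from st[OF s2] obtain d2 where d2: "b < m" "c = (b+d2) mod m" "d2 \<in> S \<or> (d2 = h \<and> ls!1 = Edge {b,c})" by blast
    have ca: "c = a" using hl vs by simp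
    have "(b + d2) mod m = (a + (d1 + d2)) mod m" unfolding d1(2) by (simp add: mod_add_left_eq add.assoc)
    then have "(a + (d1 + d2)) mod m = a" using d2(2) ca by simp
    then have "\<exists>q. d1 + d2 = q*m" by (rule closing[OF d1(1)])
    then obtain q where q: "d1 + d2 = q*m" by blast
    have "d1 \<in> S \<or> d1 = h" "d2 \<in> S \<or> d2 = h" using d1(3) d2(3) by blast+
    then have b1: "0 < d1" "d1 < m" "0 < d2" "d2 < m" using dpos by blast+
    have "0 < q * m" "q * m < 2 * m" using q b1 by linarith+
    then have "0 < q" "q < 2" by auto
    then have "q = 1" by simp
    with q have sm: "d1 + d2 = m" by simp
    have "ls = [ls!0, ls!1]" using l2 by (cases ls) (auto simp: numeral_eq_Suc length_Suc_conv)
    then have "ls!0 \<noteq> ls!1" using dl by (metis distinct_length_2_or_more)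
    show False
    proof (cases "d1 \<in> S")
      case True
      show False
      proof (cases "d2 \<in> S")
        case True
        then show False using \<open>d1 \<in> S\<close> S2 sm by blast
      next
        case False
        then have "d2 = h" using d2(3) by blast
        then have "d1 = h" using sm m by simp
        then show False using True S1 by blast
      qed
    next
      case False
      then have e1: "d1 = h" "ls!0 = Edge {a,b}" using d1(3) by blast+
      then have "d2 = h" using sm m by simp
      then have "d2 \<notin> S" using S1 by blast
      then have "ls!1 = Edge {b,c}" using d2(3) by blast
      then show False using e1 ca \<open>ls!0 \<noteq> ls!1\<close> by (simp add: insert_commute)
    qed
  next
    assume l3: "length ls = 3"
    then obtain a b c e where vs: "vs = [a,b,c,e]" using walk(1)
      by (auto simp: length_Suc_conv numeral_eq_Suc)
    have s1: "link_step A E a (ls!0) b" using walk(2)[of 0] l3 vs by simp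
    have s2: "link_step A E b (ls!1) c" using walk(2)[of 1] l3 vs by simp
    have s3: "link_step A E c (ls!2) e" using walk(2)[of 2] l3 vs by simp
    from st[OF s1] obtain d1 where d1: "a < m" "b = (a+d1) mod m" "d1 \<in> S \<or> d1 = h" by blast
    from st[OF s2] obtain d2 where d2: "b < m" "c = (b+d2) mod m" "d2 \<in> S \<or> d2 = h" by blast
    from st[OF s3] obtain d3 where d3: "c < m" "e = (c+d3) mod m" "d3 \<in> S \<or> d3 = h" by blast
    have ea: "e = a" using hl vs by simp
    have "distinct [b,c,a]" using dt unfolding vs ea by simp
    then have dis: "b \<noteq> c" "c \<noteq> a" "b \<noteq> a" by auto
    have "(c + d3) mod m = (b + (d2 + d3)) mod m" unfolding d2(2) by (simp add: mod_add_left_eq add.assoc)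
    also have "\<dots> = (a + (d1 + d2 + d3)) mod m" unfolding d1(2) by (simp add: mod_add_left_eq add.assoc)
    finally have "(a + (d1 + d2 + d3)) mod m = a" using d3(2) ea by simp
    then have "\<exists>q. d1 + d2 + d3 = q*m" by (rule closing[OF d1(1)])
    then obtain q where q: "d1 + d2 + d3 = q*m" by blast
    have b1: "0 < d1" "d1 < m" "0 < d2" "d2 < m" "0 < d3" "d3 < m" using dpos[OF d1(3)] dpos[OF d2(3)] dpos[OF d3(3)] by auto
    have "q = 1 \<or> q = 2"
    proof -
      have "0 < q * m" "q * m < 3 * m" using q b1 by linarith+
      then have "0 < q" "q < 3" by auto
      then show ?thesis by auto
    qed
    then have qq: "d1 + d2 + d3 = m \<or> d1 + d2 + d3 = 2*m" using q by auto
    have n12: "\<not> (d1 = h \<and> d2 = h)"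
    proof
      assume "d1 = h \<and> d2 = h"
      then have "c = ((a+h) mod m + h) mod m" using d1(2) d2(2) by simp
      then have "c = a" using twoh[OF d1(1) m] by simp
      then show False using dis by simp
    qed
    have n23: "\<not> (d2 = h \<and> d3 = h)"
    proof
      assume "d2 = h \<and> d3 = h"
      then have "e = ((b+h) mod m + h) mod m" using d2(2) d3(2) by simp
      then have "e = b" using twoh[OF d2(1) m] by simp
      then show False using dis ea by simp
    qed
    have n31: "\<not> (d3 = h \<and> d1 = h)"
    proof
      assume "d3 = h \<and> d1 = h"
      then have "b = ((c+h) mod m + h) mod m" using d1(2) d3(2) ea by simp
      then have "b = c" using twoh[OF d3(1) m] by simp
      then show False using dis by simp
    qed
    show False
    proof (cases "d1 = h")
      case True
      then have "d2 \<in> S" "d3 \<in> S" using n12 n31 d2(3) d3(3) by auto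
      then have "d2 + d3 \<noteq> h \<and> d2 + d3 \<noteq> 3*h" using S2 by blast
      then show ?thesis using qq True m by linarith
    next
      case f1: False
      then have s1: "d1 \<in> S" using d1(3) by auto
      show ?thesis
      proof (cases "d2 = h")
        case True
        then have "d3 \<in> S" using n23 d3(3) by auto
        then have "d1 + d3 \<noteq> h \<and> d1 + d3 \<noteq> 3*h" using S2 s1 by blast
        then show ?thesis using qq True m by linarith
      next
        case False
        then have s2: "d2 \<in> S" using d2(3) by auto
        show ?thesis
        proof (cases "d3 = h")
          case True
          have "d1 + d2 \<noteq> h \<and> d1 + d2 \<noteq> 3*h" using S2 s1 s2 by blast
          then show ?thesis using qq True m by linarith
        next
          case False
          then have "d3 \<in> S" using d3(3) by auto
          then show ?thesis using S3 s1 s2 qq by blast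
        qed
      qed
    qed
  qed
qed


lemma generic:
  fixes m h n :: nat
  assumes V: "V = {0..<m}"
    and A: "A = {(i, (i + s) mod m) | i s. i < m \<and> s \<in> S}"
    and E: "E = {{i, (i + h) mod m} | i. i < m}"
    and m: "m = 2*h" and h: "0 < h"
    and S1: "\<forall>s\<in>S. 0 < s \<and> s < m \<and> s \<noteq> h"
    and S2: "\<forall>s\<in>S. \<forall>t\<in>S. s + t \<noteq> m \<and> s + t \<noteq> h \<and> s + t \<noteq> 3*h"
    and S3: "\<forall>s\<in>S. \<forall>t\<in>S. \<forall>u\<in>S. s + t + u \<noteq> m \<and> s + t + u \<noteq> 2*m"
    and cS: "card S = n"
    and ex: "mixed_cycle V A E vs0 ls0" "length ls0 = 4"
  shows "arc_regular V A n \<and> edge_regular V E 1 \<and> mixed_girth V A E = 4"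
proof (intro conjI)
  show "arc_regular V A n"
    unfolding arc_regular_def
  proof
    fix v assume "v \<in> V"
    then have v: "v < m" using V by simp
    have o: "{w. (v, w) \<in> A} = (\<lambda>s. (v+s) mod m) ` S" using A v by auto
    have oi: "inj_on (\<lambda>s. (v+s) mod m) S"
    proof (rule inj_onI)
      fix s t assume st: "s \<in> S" "t \<in> S" "(v+s) mod m = (v+t) mod m"
      then have "s < m" "t < m" using S1 by auto
      then show "s = t" using st(3) v modlt[of "v+s" m] modlt[of "v+t" m]
        by (auto split: if_splits)
    qed
    have i: "{u. (u, v) \<in> A} = (\<lambda>s. (v+m-s) mod m) ` S"
    proof (intro set_eqI iffI)
      fix u assume "u \<in> {u. (u, v) \<in> A}"
      then obtain s where s: "u < m" "s \<in> S" "v = (u+s) mod m" using A by auto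
      then have "0 < s" "s < m" using S1 by auto
      then have "u = (v+m-s) mod m" using s modlt[of "u+s" m] modlt[of "v+m-s" m]
        by (auto split: if_splits)
      then show "u \<in> (\<lambda>s. (v+m-s) mod m) ` S" using s(2) by blast
    next
      fix u assume "u \<in> (\<lambda>s. (v+m-s) mod m) ` S"
      then obtain s where s: "s \<in> S" "u = (v+m-s) mod m" by blast
      then have "0 < s" "s < m" using S1 by auto
      then have "v = (u+s) mod m" "u < m" using s v modlt[of "u+s" m] modlt[of "v+m-s" m]
        by (auto split: if_splits)
      then show "u \<in> {u. (u, v) \<in> A}" using A s(1) by auto
    qed
    have ii: "inj_on (\<lambda>s. (v+m-s) mod m) S"
    proof (rule inj_onI)
      fix s t assume st: "s \<in> S" "t \<in> S" "(v+m-s) mod m = (v+m-t) mod m"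
      then have "0 < s" "s < m" "0 < t" "t < m" using S1 by auto
      then show "s = t" using st(3) v modlt[of "v+m-s" m] modlt[of "v+m-t" m]
        by (auto split: if_splits)
    qed
    show "card {w. (v, w) \<in> A} = n \<and> card {u. (u, v) \<in> A} = n"
      using o oi i ii cS by (simp add: card_image)
  qed
  show "edge_regular V E 1"
    unfolding edge_regular_def
  proof
    fix v assume "v \<in> V"
    then have v: "v < m" using V by simp
    have "{w. {v, w} \<in> E} = {(v+h) mod m}"
    proof (intro set_eqI iffI)
      fix w assume "w \<in> {w. {v, w} \<in> E}"
      then obtain i where i: "i < m" "{v,w} = {i, (i+h) mod m}" using E by auto
      then have "(v = i \<and> w = (i+h) mod m) \<or> (v = (i+h) mod m \<and> w = i)"
        by (auto simp: doubleton_eq_iff)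
      then show "w \<in> {(v+h) mod m}" using twoh[of i m h] i m by auto
    next
      fix w assume "w \<in> {(v+h) mod m}"
      then show "w \<in> {w. {v, w} \<in> E}" using E v by auto
    qed
    then show "card {w. {v, w} \<in> E} = 1" by simp
  qed
  show "mixed_girth V A E = 4"
    unfolding mixed_girth_def
  proof (rule order.antisym)
    have "(vs0, ls0) \<in> {(vs, ls). mixed_cycle V A E vs ls}" using ex by simp
    then have "(INF p \<in> {(vs, ls). mixed_cycle V A E vs ls}. enat (length (snd p))) \<le> enat (length (snd (vs0, ls0)))"
      by (rule INF_lower)
    then show "(INF p \<in> {(vs, ls). mixed_cycle V A E vs ls}. enat (length (snd p))) \<le> 4"
      using ex by (simp add: numeral_eq_enat)
  next
    show "4 \<le> (INF p \<in> {(vs, ls). mixed_cycle V A E vs ls}. enat (length (snd p)))"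
    proof (rule INF_greatest)
      fix p assume "p \<in> {(vs, ls). mixed_cycle V A E vs ls}"
      then obtain vs ls where p: "p = (vs, ls)" "mixed_cycle V A E vs ls" by auto
      have "4 \<le> length ls" by (rule short_free[OF p(2) A E m h S1 S2 S3])
      then show "4 \<le> enat (length (snd p))" using p by (simp add: numeral_eq_enat)
    qed
  qed
qed


lemma arcI: "i < m \<Longrightarrow> s \<in> S \<Longrightarrow> y = (i+s) mod m \<Longrightarrow> (i, y) \<in> {(i, (i + s) mod m) | i s. i < m \<and> s \<in> S}"
  by blast

lemma edgeI: "i < m \<Longrightarrow> e = {i, (i+h) mod m} \<Longrightarrow> e \<in> {{i, (i + h) mod m} | i. i < m}"
  by blast

lemma all4: "(\<forall>i<(4::nat). P i) \<longleftrightarrow> P 0 \<and> P 1 \<and> P 2 \<and> (P 3::bool)"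
  by (auto simp: numeral_eq_Suc less_Suc_eq)



lemma oddS:
  fixes k :: nat
  assumes k: "1 \<le> k" and S: "S = {1..k} \<union> {3*k+1..<4*k}"
  shows "\<forall>s\<in>S. 0 < s \<and> s < 6*k \<and> s \<noteq> 3*k"
    and "\<forall>s\<in>S. \<forall>t\<in>S. s + t \<noteq> 6*k \<and> s + t \<noteq> 3*k \<and> s + t \<noteq> 3*(3*k)"
    and "\<forall>s\<in>S. \<forall>t\<in>S. \<forall>u\<in>S. s + t + u \<noteq> 6*k \<and> s + t + u \<noteq> 2*(6*k)"
  unfolding S by (simp_all add: Ball_def; linarith)+

lemma evenS:
  fixes k :: nat
  assumes k: "1 \<le> k" and S: "S = {1..k} \<union> {3*k+2..<4*k+2}"
  shows "\<forall>s\<in>S. 0 < s \<and> s < 6*k+2 \<and> s \<noteq> 3*k+1"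
    and "\<forall>s\<in>S. \<forall>t\<in>S. s + t \<noteq> 6*k+2 \<and> s + t \<noteq> 3*k+1 \<and> s + t \<noteq> 3*(3*k+1)"
    and "\<forall>s\<in>S. \<forall>t\<in>S. \<forall>u\<in>S. s + t + u \<noteq> 6*k+2 \<and> s + t + u \<noteq> 2*(6*k+2)"
  unfolding S by (simp_all add: Ball_def; linarith)+


lemma odd_case:
  fixes n k :: nat
  assumes nk: "n + 1 = 2*k" and k: "1 \<le> k"
  shows "arc_regular (D_V n) (D_A n) n \<and> edge_regular (D_V n) (D_E n) 1 \<and>
         mixed_girth (D_V n) (D_A n) (D_E n) = 4"
proof -
  have od: "odd n" using nk by presburger
  have Dm: "D_m n = 6*k" using od nk unfolding D_m_def by simp
  have h: "D_m n div 2 = 3*k" using Dm by simp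
  define S where "S = {1..k} \<union> {3*k+1..<4*k}"
  have e1: "3 * (n + 1) div 2 + 1 = 3*k+1" using nk by simp
  have e2: "{3*k+1 .. 2*n+1} = {3*k+1..<4*k}" using nk k by auto
  have e3: "(n + 1) div 2 = k" using nk by simp
  have DS: "D_S n = S" unfolding D_S_def S_def if_P[OF od] e3 e1 e2 by (rule refl)
  have V: "D_V n = {0..<6*k}" using Dm D_V_def by simp
  have A: "D_A n = {(i, (i + s) mod (6*k)) | i s. i < 6*k \<and> s \<in> S}" using Dm DS D_A_def by simp
  have E: "D_E n = {{i, (i + 3*k) mod (6*k)} | i. i < 6*k}" using Dm h D_E_def by simp
  have cS: "card S = n" unfolding S_def
    using nk k by (subst card_Un_disjoint) auto
  have kS: "k \<in> S" using k S_def by simp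
  have a1: "(0, k) \<in> D_A n" unfolding A by (rule arcI[of _ _ k]) (use k kS in simp_all)
  have a2: "(k, 2*k) \<in> D_A n" unfolding A by (rule arcI[of _ _ k]) (use k kS in simp_all)
  have a3: "(2*k, 3*k) \<in> D_A n" unfolding A by (rule arcI[of _ _ k]) (use k kS in simp_all)
  have e4: "{3*k, 0} \<in> D_E n" unfolding E by (rule edgeI[of "3*k"]) (use k in simp_all)
  have ls: "link_step (D_A n) (D_E n) 0 (Arc 0 k) k"
           "link_step (D_A n) (D_E n) k (Arc k (2*k)) (2*k)"
           "link_step (D_A n) (D_E n) (2*k) (Arc (2*k) (3*k)) (3*k)"
           "link_step (D_A n) (D_E n) (3*k) (Edge {3*k, 0}) 0"
    using a1 a2 a3 e4 unfolding link_step_def by simp_all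
  have cyc: "mixed_cycle (D_V n) (D_A n) (D_E n) [0, k, 2*k, 3*k, 0] [Arc 0 k, Arc k (2*k), Arc (2*k) (3*k), Edge {3*k, 0}]"
    unfolding mixed_cycle_def mixed_walk_def
    using ls k V by (simp add: All_less_Suc2)
  show ?thesis
    by (rule generic[OF V A E _ _ oddS[OF k S_def] cS cyc]) (use k in simp_all)
qed


lemma even_case:
  fixes n k :: nat
  assumes nk: "n = 2*k" and k: "1 \<le> k"
  shows "arc_regular (D_V n) (D_A n) n \<and> edge_regular (D_V n) (D_E n) 1 \<and>
         mixed_girth (D_V n) (D_A n) (D_E n) = 4"
proof -
  have ev: "\<not> odd n" using nk by presburger
  have Dm: "D_m n = 6*k+2" using ev nk unfolding D_m_def by simp
  have h: "D_m n div 2 = 3*k+1" using Dm by simp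
  define S where "S = {1..k} \<union> {3*k+2..<4*k+2}"
  have e1: "(3 * n + 2) div 2 + 1 = 3*k+2" using nk by simp
  have e2: "{3*k+2 .. 2*n+1} = {3*k+2..<4*k+2}" using nk k by auto
  have e3: "n div 2 = k" using nk by simp
  have DS: "D_S n = S" unfolding D_S_def S_def if_not_P[OF ev] e3 e1 e2 by (rule refl)
  have V: "D_V n = {0..<6*k+2}" using Dm D_V_def by simp
  have A: "D_A n = {(i, (i + s) mod (6*k+2)) | i s. i < 6*k+2 \<and> s \<in> S}" using Dm DS D_A_def by simp
  have E: "D_E n = {{i, (i + (3*k+1)) mod (6*k+2)} | i. i < 6*k+2}" using Dm h D_E_def by simp
  have cS: "card S = n" unfolding S_def
    using nk k by (subst card_Un_disjoint) auto
  have kS: "k \<in> S" "1 \<in> S" "4*k+1 \<in> S" using k S_def by simp_all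
  have a1: "(0, 1) \<in> D_A n" unfolding A by (rule arcI[of _ _ 1]) (use k kS in simp_all)
  have a2: "(1, k+1) \<in> D_A n" unfolding A by (rule arcI[of _ _ k]) (use k kS in simp_all)
  have a3: "(k+1, 2*k+1) \<in> D_A n" unfolding A by (rule arcI[of _ _ k]) (use k kS in simp_all)
  have a4: "(2*k+1, 0) \<in> D_A n" unfolding A by (rule arcI[of _ _ "4*k+1"]) (use k kS in simp_all)
  have ls: "link_step (D_A n) (D_E n) 0 (Arc 0 1) 1"
           "link_step (D_A n) (D_E n) 1 (Arc 1 (k+1)) (k+1)"
           "link_step (D_A n) (D_E n) (k+1) (Arc (k+1) (2*k+1)) (2*k+1)"
           "link_step (D_A n) (D_E n) (2*k+1) (Arc (2*k+1) 0) 0"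
    using a1 a2 a3 a4 unfolding link_step_def by simp_all
  have cyc: "mixed_cycle (D_V n) (D_A n) (D_E n) [0, 1, k+1, 2*k+1, 0] [Arc 0 1, Arc 1 (k+1), Arc (k+1) (2*k+1), Arc (2*k+1) 0]"
    unfolding mixed_cycle_def mixed_walk_def
    using ls k V by (simp add: All_less_Suc2)
  show ?thesis
    by (rule generic[OF V A E _ _ evenS[OF k S_def] cS cyc]) (use k in simp_all)
qed

theorem lemma8:
  fixes n :: nat
  assumes "n \<ge> 1"
  shows "arc_regular (D_V n) (D_A n) n \<and> edge_regular (D_V n) (D_E n) 1 \<and>
         mixed_girth (D_V n) (D_A n) (D_E n) = 4"
proof (cases "odd n")
  case True
  then obtain j where "n = 2*j + 1" by (meson oddE)
  then show ?thesis by (intro odd_case[of n "j+1"]) simp_all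
next
  case False
  then obtain k where nk: "n = 2*k" by (meson evenE)
  then have "1 \<le> k" using assms by simp
  then show ?thesis using even_case[OF nk] by simp
qed

end
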